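(* Let $(q,\boldsymbol{\alpha}^{(p)},\boldsymbol{\alpha}^{(s)},\boldsymbol{\beta}^{(p)},\boldsymbol{\beta}^{(s)})$ be a cyclic-addition degree table (CAT) for parameters $K,L,T$ with $N$ unique entries. Let $p$ be a prime with $q\mid p-1$ and let $\boldsymbol\rho=(\rho_1,\dots,\rho_N)$ be $q$-th roots of unity in $\mathbb{F}_p$ satisfying conditions (IV)(a) and (IV)(b) of the CAT definition. Then the polynomial-code PDMM scheme with $N$ workers defined in the context by these degrees and evaluation points is $T$-private and decodable.
   Context: Definition (CAT). For a positive integer $q$ and vectors $\boldsymbol{\alpha}^{(p)}\in\mathbb{Z}_q^K,\boldsymbol{\alpha}^{(s)}\in\mathbb{Z}_q^T,\boldsymbol{\beta}^{(p)}\in\mathbb{Z}_q^L,\boldsymbol{\beta}^{(s)}\in\mathbb{Z}_q^T$ ($\mathbb{Z}_q$ the integers mod $q$), write $\{\mathbf v\}$ for the set of entries of a vector $\mathbf v$ and let (additions in $\mathbb{Z}_q$, sumsets $\mathcal A+\mathcal B=\{a+b\}$) $\mathcal{TL}=\{\boldsymbol{\alpha}^{(p)}\}+\{\boldsymbol{\beta}^{(p)}\}$, $\mathcal{TR}=\{\boldsymbol{\alpha}^{(p)}\}+\{\boldsymbol{\beta}^{(s)}\}$, $\mathcal{BL}=\{\boldsymbol{\alpha}^{(s)}\}+\{\boldsymbol{\beta}^{(p)}\}$, $\mathcal{BR}=\{\boldsymbol{\alpha}^{(s)}\}+\{\boldsymbol{\beta}^{(s)}\}$, and let $\boldsymbol\gamma$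 list the elements of $\mathcal{TL}\cup\mathcal{TR}\cup\mathcal{BL}\cup\mathcal{BR}$ in ascending order (identifying $\mathbb{Z}_q$ with $\{0,\dots,q-1\}$). For a vector $\boldsymbol\rho$ of length $n$ of $q$-th roots of unity and $\boldsymbol\delta\in\mathbb{Z}_q^m$, $\mathbf V(\boldsymbol\rho,\boldsymbol\delta)$ is the $n\times m$ matrix with entries $\rho_i^{\delta_j}$. The tuple is a CAT for $K,L,T$ with $N$ unique entries if: (I) $|\mathcal{TL}\cup\mathcal{TR}\cup\mathcal{BL}\cup\mathcal{BR}|=N$; (II) $|\mathcal{TL}|=KL$; (III) $\mathcal{TL}\cap\mathcal{TR}=\mathcal{TL}\cap\mathcal{BL}=\mathcal{TL}\cap\mathcal{BR}=\emptyset$; (IV) in every prime field $\mathbb{F}_p$ with $q\mid p-1$ there exist $N$ $q$-th roots of unity $\boldsymbol\rho=(\rho_1,\dots,\rho_N)$ such that (a) $\mathbf V(\boldsymbol\rho,\boldsymbol\gamma)$ is invertible and (b) all $T\times T$ submatrices of $\mathbf V(\boldsymbol\rho,\boldsymbol{\alpha}^{(s)})$ and of $\mathbf V(\boldsymbol\rho,\boldsymbol{\beta}^{(s)})$ are invertible. The scheme: matrices $\mathbf A\in\mathbb{F}_p^{r_A\times c_A}$ and $\mathbf B\in\mathbb{F}_p^{c_A\times c_B}$ have an arbitrary (unknown) joint distribution, with $K\mid r_A$, $L\mid c_B$. Write $\mathbf A=(\mathbf A_1^T\cdots\mathbf A_K^T)^T$ (horizontal split into $K$ equal blocks) and $\mathbf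 B=(\mathbf B_1\cdots\mathbf B_L)$ (vertical split into $L$ equal blocks). A main node draws $\mathbf R_1,\dots,\mathbf R_T$ (of the size of $\mathbf A_i$) and $\mathbf S_1,\dots,\mathbf S_T$ (of the size of $\mathbf B_j$) independently and uniformly at random, independent of $(\mathbf A,\mathbf B)$, and forms $\mathbf F(x)=\sum_{i=1}^K\mathbf A_i x^{\alpha^{(p)}_i}+\sum_{i=1}^T\mathbf R_i x^{\alpha^{(s)}_i}$ and $\mathbf G(x)=\sum_{j=1}^L\mathbf B_j x^{\beta^{(p)}_j}+\sum_{j=1}^T\mathbf S_j x^{\beta^{(s)}_j}$ (exponents taken as representatives in $\{0,\dots,q-1\}$). Worker $n\in\{1,\dots,N\}$ receives $\widetilde{\mathbf A}_n=\mathbf F(\rho_n)$, $\widetilde{\mathbf B}_n=\mathbf G(\rho_n)$ and returns $\widetilde{\mathbf A}_n\widetilde{\mathbf B}_n$. The scheme is $T$-private if for every set $\mathcal T\subset\{1,\dots,N\}$ with $|\mathcal T|=T$ the mutual information between $(\mathbf A,\mathbf B)$ and $\{(\widetilde{\mathbf A}_n,\widetilde{\mathbf B}_n):n\in\mathcal T\}$ is zero. It is decodable if the main node can compute all products $\mathbf A_i\mathbf B_j$, $i\in\{1,\dots,K\}$, $j\in\{1,\dots,L\}$, from the $N$ returned products. *)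

theory Defs
  imports "Jordan_Normal_Form.Determinant" "Jordan_Normal_Form.DL_Submatrix"
          "HOL-Probability.Probability_Mass_Function"
begin

(* Vectors of length n are functions nat => _ read on {0..<n} (0-based indices).
   Elements of Z_q are represented by their representatives in {0..<q}. *)

definition Vmat :: "(nat \<Rightarrow> 'a::comm_ring_1) \<Rightarrow> nat \<Rightarrow> (nat \<Rightarrow> nat) \<Rightarrow> nat \<Rightarrow> 'a mat" where
  "Vmat rho n delta m = Matrix.mat n m (\<lambda>(i,j). rho i ^ delta j)"

definition sumset :: "nat \<Rightarrow> (nat \<Rightarrow> nat) \<Rightarrow> nat \<Rightarrow> (nat \<Rightarrow> nat) \<Rightarrow> nat \<Rightarrow> nat set" where
  "sumset q a k b l = {(a i + b j) mod q | i j. i < k \<and> j < l}"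

definition TLset where "TLset q K L T ap as bp bs = sumset q ap K bp L"
definition TRset where "TRset q K L T ap as bp bs = sumset q ap K bs T"
definition BLset where "BLset q K L T ap as bp bs = sumset q as T bp L"
definition BRset where "BRset q K L T ap as bp bs = sumset q as T bs T"

definition allset where
  "allset q K L T ap as bp bs =
     TLset q K L T ap as bp bs \<union> TRset q K L T ap as bp bs \<union>
     BLset q K L T ap as bp bs \<union> BRset q K L T ap as bp bs"

definition gamma :: "nat \<Rightarrow> nat \<Rightarrow> nat \<Rightarrow> nat \<Rightarrow> (nat \<Rightarrow> nat) \<Rightarrow> (nat \<Rightarrow> nat) \<Rightarrow>
    (nat \<Rightarrow> nat) \<Rightarrow> (nat \<Rightarrow> nat) \<Rightarrow> nat \<Rightarrow> nat" where
  "gamma q K L T ap as bp bs j = sorted_list_of_set (allset q K L T ap as bp bs) ! j"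

definition cond_IV_ab :: "nat \<Rightarrow> nat \<Rightarrow> nat \<Rightarrow> nat \<Rightarrow> nat \<Rightarrow> (nat \<Rightarrow> nat) \<Rightarrow> (nat \<Rightarrow> nat) \<Rightarrow>
    (nat \<Rightarrow> nat) \<Rightarrow> (nat \<Rightarrow> nat) \<Rightarrow> (nat \<Rightarrow> 'a::field) \<Rightarrow> bool" where
  "cond_IV_ab q K L T N ap as bp bs rho \<longleftrightarrow>
     (\<forall>i<N. rho i ^ q = 1) \<and>
     invertible_mat (Vmat rho N (gamma q K L T ap as bp bs) N) \<and>
     (\<forall>I \<subseteq> {0..<N}. card I = T \<longrightarrow>
        invertible_mat (submatrix (Vmat rho N as T) I {0..<T}) \<and>
        invertible_mat (submatrix (Vmat rho N bs T) I {0..<T}))"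

(* The same condition in the prime field F_p, elements represented by integers;
   a square integer matrix is invertible over F_p iff its determinant is nonzero mod p *)
definition cond_IV_ab_modp :: "int \<Rightarrow> nat \<Rightarrow> nat \<Rightarrow> nat \<Rightarrow> nat \<Rightarrow> nat \<Rightarrow> (nat \<Rightarrow> nat) \<Rightarrow> (nat \<Rightarrow> nat) \<Rightarrow>
    (nat \<Rightarrow> nat) \<Rightarrow> (nat \<Rightarrow> nat) \<Rightarrow> (nat \<Rightarrow> int) \<Rightarrow> bool" where
  "cond_IV_ab_modp p q K L T N ap as bp bs rho \<longleftrightarrow>
     (\<forall>i<N. rho i ^ q mod p = 1 mod p) \<and>
     \<not> p dvd Determinant.det (Vmat rho N (gamma q K L T ap as bp bs) N) \<and>
     (\<forall>I \<subseteq> {0..<N}. card I = T \<longrightarrow>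
        \<not> p dvd Determinant.det (submatrix (Vmat rho N as T) I {0..<T}) \<and>
        \<not> p dvd Determinant.det (submatrix (Vmat rho N bs T) I {0..<T}))"

definition is_CAT :: "nat \<Rightarrow> nat \<Rightarrow> nat \<Rightarrow> nat \<Rightarrow> nat \<Rightarrow> (nat \<Rightarrow> nat) \<Rightarrow> (nat \<Rightarrow> nat) \<Rightarrow>
    (nat \<Rightarrow> nat) \<Rightarrow> (nat \<Rightarrow> nat) \<Rightarrow> bool" where
  "is_CAT q K L T N ap as bp bs \<longleftrightarrow>
     q > 0 \<and>
     (\<forall>i<K. ap i < q) \<and> (\<forall>i<T. as i < q) \<and> (\<forall>j<L. bp j < q) \<and> (\<forall>j<T. bs j < q) \<and>
     card (allset q K L T ap as bp bs) = N \<and>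
     card (TLset q K L T ap as bp bs) = K * L \<and>
     TLset q K L T ap as bp bs \<inter> TRset q K L T ap as bp bs = {} \<and>
     TLset q K L T ap as bp bs \<inter> BLset q K L T ap as bp bs = {} \<and>
     TLset q K L T ap as bp bs \<inter> BRset q K L T ap as bp bs = {} \<and>
     (\<forall>p::nat. prime p \<and> q dvd p - 1 \<longrightarrow>
        (\<exists>rho. cond_IV_ab_modp (int p) q K L T N ap as bp bs rho))"

definition blockA :: "nat \<Rightarrow> 'a mat \<Rightarrow> nat \<Rightarrow> 'a mat" where
  "blockA K A i = Matrix.mat (dim_row A div K) (dim_col A) (\<lambda>(r,c). A $$ (i * (dim_row A div K) + r, c))"

definition blockB :: "nat \<Rightarrow> 'a mat \<Rightarrow> nat \<Rightarrow> 'a mat" where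
  "blockB L B j = Matrix.mat (dim_row B) (dim_col B div L) (\<lambda>(r,c). B $$ (r, j * (dim_col B div L) + c))"

definition encF :: "nat \<Rightarrow> nat \<Rightarrow> (nat \<Rightarrow> nat) \<Rightarrow> (nat \<Rightarrow> nat) \<Rightarrow> 'a::comm_ring_1 mat \<Rightarrow>
    'a mat list \<Rightarrow> 'a \<Rightarrow> 'a mat" where
  "encF K T ap as A Rs x = Matrix.mat (dim_row A div K) (dim_col A) (\<lambda>(r,c).
      (\<Sum>i<K. blockA K A i $$ (r,c) * x ^ ap i) + (\<Sum>i<T. (Rs ! i) $$ (r,c) * x ^ as i))"

definition encG :: "nat \<Rightarrow> nat \<Rightarrow> (nat \<Rightarrow> nat) \<Rightarrow> (nat \<Rightarrow> nat) \<Rightarrow> 'a::comm_ring_1 mat \<Rightarrow>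
    'a mat list \<Rightarrow> 'a \<Rightarrow> 'a mat" where
  "encG L T bp bs B Ss x = Matrix.mat (dim_row B) (dim_col B div L) (\<lambda>(r,c).
      (\<Sum>j<L. blockB L B j $$ (r,c) * x ^ bp j) + (\<Sum>j<T. (Ss ! j) $$ (r,c) * x ^ bs j))"

definition unif_mats :: "nat \<Rightarrow> nat \<Rightarrow> nat \<Rightarrow> 'a::{finite,zero} mat list pmf" where
  "unif_mats T r c = pmf_of_set {Ms. length Ms = T \<and> set Ms \<subseteq> carrier_mat r c}"

definition view_experiment ::
  "nat \<Rightarrow> nat \<Rightarrow> nat \<Rightarrow> (nat \<Rightarrow> nat) \<Rightarrow> (nat \<Rightarrow> nat) \<Rightarrow> (nat \<Rightarrow> nat) \<Rightarrow> (nat \<Rightarrow> nat) \<Rightarrow>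
   (nat \<Rightarrow> 'a::{finite,field}) \<Rightarrow> ('a mat \<times> 'a mat) pmf \<Rightarrow> nat set \<Rightarrow>
   (('a mat \<times> 'a mat) \<times> ('a mat \<times> 'a mat) list) pmf" where
  "view_experiment K L T ap as bp bs rho D W =
     do { AB \<leftarrow> D;
          Rs \<leftarrow> unif_mats T (dim_row (fst AB) div K) (dim_col (fst AB));
          Ss \<leftarrow> unif_mats T (dim_row (snd AB)) (dim_col (snd AB) div L);
          return_pmf (AB, map (\<lambda>n. (encF K T ap as (fst AB) Rs (rho n),
                                     encG L T bp bs (snd AB) Ss (rho n)))
                              (sorted_list_of_set W)) }"

definition mutual_info :: "('x \<times> 'y) pmf \<Rightarrow> real" where
  "mutual_info J = (\<Sum>z\<in>set_pmf J. pmf J z *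
      log 2 (pmf J z / (pmf (map_pmf fst J) (fst z) * pmf (map_pmf snd J) (snd z))))"

definition T_private where
  "T_private rA cA cB K L T N ap as bp bs (rho :: nat \<Rightarrow> 'a::{finite,field}) \<longleftrightarrow>
     (\<forall>D :: ('a mat \<times> 'a mat) pmf. set_pmf D \<subseteq> carrier_mat rA cA \<times> carrier_mat cA cB \<longrightarrow>
        (\<forall>W \<subseteq> {0..<N}. card W = T \<longrightarrow>
           mutual_info (view_experiment K L T ap as bp bs rho D W) = 0))"

definition decodable where
  "decodable rA cA cB K L T N ap as bp bs (rho :: nat \<Rightarrow> 'a::{finite,field}) \<longleftrightarrow>
     (\<exists>dec :: 'a mat list \<Rightarrow> nat \<Rightarrow> nat \<Rightarrow> 'a mat.
        \<forall>A B Rs Ss. A \<in> carrier_mat rA cA \<longrightarrow> B \<in> carrier_mat cA cB \<longrightarrow>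
          length Rs = T \<longrightarrow> set Rs \<subseteq> carrier_mat (rA div K) cA \<longrightarrow>
          length Ss = T \<longrightarrow> set Ss \<subseteq> carrier_mat cA (cB div L) \<longrightarrow>
          (\<forall>i<K. \<forall>j<L.
             dec (map (\<lambda>n. encF K T ap as A Rs (rho n) * encG L T bp bs B Ss (rho n)) [0..<N]) i j
               = blockA K A i * blockB L B j))"

end

theory Submission
  imports Defs
begin


lemma expand4:
  fixes x :: "'a::comm_ring_1"
  shows "((\<Sum>i\<in>I. a i * x^e i) + (\<Sum>t\<in>J. r t * x^f t)) * ((\<Sum>j\<in>I2. b j * x^g j) + (\<Sum>s\<in>J2. u s * x^h s))
   = (\<Sum>i\<in>I. \<Sum>j\<in>I2. (a i * b j) * x^(e i + g j)) + (\<Sum>i\<in>I. \<Sum>s\<in>J2. (a i * u s) * x^(e i + h s))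
   + (\<Sum>t\<in>J. \<Sum>j\<in>I2. (r t * b j) * x^(f t + g j)) + (\<Sum>t\<in>J. \<Sum>s\<in>J2. (r t * u s) * x^(f t + h s))"
  unfolding distrib_left distrib_right sum_product by (simp add: power_add mult_ac add_ac)

lemma lin2:
  fixes v :: "nat \<Rightarrow> 'a::comm_ring_1"
  shows "(\<Sum>n\<in>N. v n * (\<Sum>i\<in>I. \<Sum>j\<in>J. c i j * x n ^ e i j)) = (\<Sum>i\<in>I. \<Sum>j\<in>J. c i j * (\<Sum>n\<in>N. v n * x n ^ e i j))"
proof -
  have "(\<Sum>n\<in>N. v n * (\<Sum>i\<in>I. \<Sum>j\<in>J. c i j * x n ^ e i j)) = (\<Sum>n\<in>N. \<Sum>i\<in>I. \<Sum>j\<in>J. c i j * (v n * x n ^ e i j))"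
    by (simp add: sum_distrib_left mult_ac)
  also have "\<dots> = (\<Sum>i\<in>I. \<Sum>n\<in>N. \<Sum>j\<in>J. c i j * (v n * x n ^ e i j))"
    by (rule sum.swap)
  also have "\<dots> = (\<Sum>i\<in>I. \<Sum>j\<in>J. \<Sum>n\<in>N. c i j * (v n * x n ^ e i j))"
    by (rule sum.cong[OF refl], rule sum.swap)
  also have "\<dots> = (\<Sum>i\<in>I. \<Sum>j\<in>J. c i j * (\<Sum>n\<in>N. v n * x n ^ e i j))"
    by (simp add: sum_distrib_left)
  finally show ?thesis .
qed

lemma decode_core:
  fixes v x :: "nat \<Rightarrow> 'a::comm_ring_1" and K L T N M i j :: nat
  assumes TL: "\<And>i' j'. i'<K \<Longrightarrow> j'<L \<Longrightarrow> (\<Sum>n<N. v n * x n ^ (ap i' + bp j')) = (if i'=i \<and> j'=j then 1 else 0)"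
    and TR: "\<And>i' s. i'<K \<Longrightarrow> s<T \<Longrightarrow> (\<Sum>n<N. v n * x n ^ (ap i' + bs s)) = 0"
    and BL: "\<And>t j'. t<T \<Longrightarrow> j'<L \<Longrightarrow> (\<Sum>n<N. v n * x n ^ (as t + bp j')) = 0"
    and BR: "\<And>t s. t<T \<Longrightarrow> s<T \<Longrightarrow> (\<Sum>n<N. v n * x n ^ (as t + bs s)) = 0"
    and ij: "i<K" "j<L"
  shows "(\<Sum>n<N. v n * (\<Sum>l<M. ((\<Sum>i'<K. a i' l * x n ^ ap i') + (\<Sum>t<T. R t l * x n ^ as t)) *
            ((\<Sum>j'<L. b j' l * x n ^ bp j') + (\<Sum>s<T. S s l * x n ^ bs s)))) = (\<Sum>l<M. a i l * b j l)"
proof -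
  have "(\<Sum>n<N. v n * (\<Sum>l<M. ((\<Sum>i'<K. a i' l * x n ^ ap i') + (\<Sum>t<T. R t l * x n ^ as t)) *
            ((\<Sum>j'<L. b j' l * x n ^ bp j') + (\<Sum>s<T. S s l * x n ^ bs s))))
     = (\<Sum>l<M. \<Sum>n<N. v n * (((\<Sum>i'<K. a i' l * x n ^ ap i') + (\<Sum>t<T. R t l * x n ^ as t)) *
            ((\<Sum>j'<L. b j' l * x n ^ bp j') + (\<Sum>s<T. S s l * x n ^ bs s))))"
    by (simp add: sum_distrib_left sum.swap[of _ "{..<N}"])
  also have "\<dots> = (\<Sum>l<M. a i l * b j l)"
  proof (rule sum.cong[OF refl])
    fix l
    have "(\<Sum>n<N. v n * (((\<Sum>i'<K. a i' l * x n ^ ap i') + (\<Sum>t<T. R t l * x n ^ as t)) *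
            ((\<Sum>j'<L. b j' l * x n ^ bp j') + (\<Sum>s<T. S s l * x n ^ bs s))))
      = (\<Sum>i'<K. \<Sum>j'<L. (a i' l * b j' l) * (\<Sum>n<N. v n * x n ^ (ap i' + bp j')))
      + (\<Sum>i'<K. \<Sum>s<T. (a i' l * S s l) * (\<Sum>n<N. v n * x n ^ (ap i' + bs s)))
      + (\<Sum>t<T. \<Sum>j'<L. (R t l * b j' l) * (\<Sum>n<N. v n * x n ^ (as t + bp j')))
      + (\<Sum>t<T. \<Sum>s<T. (R t l * S s l) * (\<Sum>n<N. v n * x n ^ (as t + bs s)))"
      unfolding expand4 unfolding distrib_left sum.distrib lin2 by (simp add: mult_ac)
    also have "\<dots> = (\<Sum>i'<K. \<Sum>j'<L. (a i' l * b j' l) * (if i'=i \<and> j'=j then 1 else 0))"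
      using TL TR BL BR by simp
    also have "\<dots> = (\<Sum>i'<K. if i' = i then a i l * b j l else 0)"
    proof (rule sum.cong[OF refl])
      fix i'
      have d: "(\<Sum>j'<L. (if j' = j then a i l * b j l else 0)) = a i l * b j l"
        using ij by (subst sum.delta) auto
      show "(\<Sum>j'<L. (a i' l * b j' l) * (if i'=i \<and> j'=j then 1 else 0)) = (if i' = i then a i l * b j l else 0)"
        using d by (cases "i' = i") (auto simp: if_distrib cong: if_cong)
    qed
    also have "\<dots> = a i l * b j l"
      using ij by simp
    finally show "(\<Sum>n<N. v n * (((\<Sum>i'<K. a i' l * x n ^ ap i') + (\<Sum>t<T. R t l * x n ^ as t)) *
            ((\<Sum>j'<L. b j' l * x n ^ bp j') + (\<Sum>s<T. S s l * x n ^ bs s)))) = a i l * b j l" .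
  qed
  finally show ?thesis .
qed

lemma pow_mod_q:
  fixes x :: "'a::comm_monoid_mult"
  assumes "x ^ q = 1" shows "x ^ e = x ^ (e mod q)"
proof -
  have "x ^ e = x ^ (q * (e div q) + e mod q)" by simp
  also have "\<dots> = (x^q)^(e div q) * x^(e mod q)" by (simp only: power_add power_mult)
  finally show ?thesis using assms by simp
qed

lemma sumset_alt: "sumset q a k b l = (\<lambda>(i,j). (a i + b j) mod q) ` ({..<k} \<times> {..<l})"
  unfolding sumset_def by auto

lemma finite_sumset: "finite (sumset q a k b l)" by (simp add: sumset_alt)

lemma decodable_thm:
  fixes rho :: "nat \<Rightarrow> 'a::{finite,field}"
  assumes cat: "is_CAT q K L T N ap as bp bs"
    and rho_IV: "cond_IV_ab q K L T N ap as bp bs rho"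
  shows "decodable rA cA cB K L T N ap as bp bs rho"
proof -
  define S where "S = allset q K L T ap as bp bs"
  define g where "g = gamma q K L T ap as bp bs"
  define TL where "TL = TLset q K L T ap as bp bs"
  have finS: "finite S" unfolding S_def allset_def TLset_def TRset_def BLset_def BRset_def
    by (simp add: finite_sumset)
  have cardS: "card S = N" using cat unfolding is_CAT_def S_def by simp
  have lenS: "length (sorted_list_of_set S) = N" using cardS by simp
  have distS: "distinct (sorted_list_of_set S)" by simp
  have setS: "set (sorted_list_of_set S) = S" using finS by simp
  have g_eq: "\<And>m. g m = sorted_list_of_set S ! m" unfolding g_def gamma_def S_def by simp
  have gS: "\<And>m. m < N \<Longrightarrow> g m \<in> S" using g_eq lenS setS nth_mem by metis
  have gsurj: "\<And>s. s \<in> S \<Longrightarrow> \<exists>m<N. g m = s" using g_eq lenS setS by (metis in_set_conv_nth)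
  have ginj: "\<And>m m'. m < N \<Longrightarrow> m' < N \<Longrightarrow> g m = g m' \<Longrightarrow> m = m'"
    using g_eq lenS distS nth_eq_iff_index_eq by metis
  have rhoq: "\<And>n. n < N \<Longrightarrow> rho n ^ q = 1" using rho_IV unfolding cond_IV_ab_def by simp
  have inv: "invertible_mat (Vmat rho N g N)" using rho_IV unfolding cond_IV_ab_def g_def by simp
  then obtain Bi where Bi: "inverts_mat Bi (Vmat rho N g N)" "inverts_mat (Vmat rho N g N) Bi"
    unfolding invertible_mat_def by blast
  have VN: "dim_row (Vmat rho N g N) = N" "dim_col (Vmat rho N g N) = N" unfolding Vmat_def by simp_all
  have BiN1: "dim_col Bi = N"
    using Bi(2) VN unfolding inverts_mat_def by (metis dim_col_mat(1) index_mult_mat(3) index_one_mat(3))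
  have BiN: "dim_row Bi = N" 
    using Bi(1) VN unfolding inverts_mat_def by (metis index_mult_mat(3) index_one_mat(3))
  have BiV: "Bi * Vmat rho N g N = 1\<^sub>m N" using Bi(1) BiN unfolding inverts_mat_def by simp
  define E where "E k e = (\<Sum>n<N. Bi $$ (k,n) * rho n ^ e)" for k e
  have E_g: "E k (g m) = (if k = m then 1 else 0)" if km: "k<N" "m<N" for k m
  proof -
    have "(Bi * Vmat rho N g N) $$ (k,m) = (\<Sum>n<N. Bi $$ (k,n) * rho n ^ g m)"
      using km BiN BiN1 unfolding Vmat_def
      by (simp add: scalar_prod_def row_def col_def atLeast0LessThan)
    then show ?thesis using BiV km unfolding E_def by simp
  qed
  have E_mod: "E k e = E k (e mod q)" for k e
    unfolding E_def by (rule sum.cong[OF refl]) (metis lessThan_iff pow_mod_q rhoq)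
  have E_S: "E k e = (if e mod q = g k then 1 else 0)" if k: "k<N" and e: "e mod q \<in> S" for k e
  proof -
    obtain m where m: "m<N" "g m = e mod q" using gsurj e by blast
    have "E k e = E k (g m)" using E_mod m by simp
    also have "\<dots> = (if k = m then 1 else 0)" by (rule E_g[OF k m(1)])
    also have "\<dots> = (if e mod q = g k then 1 else 0)" using ginj k m by metis
    finally show ?thesis .
  qed
  have cardTL: "card TL = K * L" using cat unfolding is_CAT_def TL_def by simp
  have TL_alt: "TL = (\<lambda>(i,j). (ap i + bp j) mod q) ` ({..<K} \<times> {..<L})"
    unfolding TL_def TLset_def sumset_alt ..
  have TLinj: "inj_on (\<lambda>(i,j). (ap i + bp j) mod q) ({..<K} \<times> {..<L})"
    by (rule eq_card_imp_inj_on) (use cardTL TL_alt in auto)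
  have TLS: "TL \<subseteq> S" unfolding TL_def S_def allset_def by auto
  have TLdisj: "TL \<inter> TRset q K L T ap as bp bs = {}" "TL \<inter> BLset q K L T ap as bp bs = {}"
     "TL \<inter> BRset q K L T ap as bp bs = {}" using cat unfolding is_CAT_def TL_def by auto
  have TRS: "(ap i + bs s) mod q \<in> S \<and> (ap i + bs s) mod q \<in> TRset q K L T ap as bp bs" if "i<K" "s<T" for i s
    using that unfolding S_def allset_def TRset_def sumset_def by blast
  have BLS: "(as t + bp j) mod q \<in> S \<and> (as t + bp j) mod q \<in> BLset q K L T ap as bp bs" if "t<T" "j<L" for t j
    using that unfolding S_def allset_def BLset_def sumset_def by blast
  have BRS: "(as t + bs s) mod q \<in> S \<and> (as t + bs s) mod q \<in> BRset q K L T ap as bp bs" if "t<T" "s<T" for t s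
    using that unfolding S_def allset_def BRset_def sumset_def by blast
  have TLm: "(ap i + bp j) mod q \<in> TL" if "i<K" "j<L" for i j
    using that unfolding TL_alt by auto
  define kidx where "kidx i j = (SOME k. k < N \<and> g k = (ap i + bp j) mod q)" for i j
  have kidx: "kidx i j < N \<and> g (kidx i j) = (ap i + bp j) mod q" if "i<K" "j<L" for i j
  proof -
    have "\<exists>k. k < N \<and> g k = (ap i + bp j) mod q" using gsurj TLm[OF that] TLS by blast
    then show ?thesis unfolding kidx_def by (rule someI_ex)
  qed
  define dec where "dec Ps i j = Matrix.mat (rA div K) (cB div L)
      (\<lambda>(r,c). \<Sum>n<N. Bi $$ (kidx i j, n) * (Ps ! n) $$ (r,c))" for Ps :: "'a mat list" and i j
  show ?thesis unfolding decodable_def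
  proof (intro exI[of _ dec] allI impI)
    fix A B :: "'a mat" and Rs Ss :: "'a mat list"
    assume A: "A \<in> carrier_mat rA cA" and B: "B \<in> carrier_mat cA cB"
      and Rs: "length Rs = T" "set Rs \<subseteq> carrier_mat (rA div K) cA"
      and Ss: "length Ss = T" "set Ss \<subseteq> carrier_mat cA (cB div L)"
    fix i j assume ij: "i < K" "j < L"
      define k where "k = kidx i j"
      have k: "k < N" "g k = (ap i + bp j) mod q" using kidx[OF ij] unfolding k_def by auto
      have gkTL: "g k \<in> TL" using k TLm ij by simp
      have ETL: "E k (ap i' + bp j') = (if i' = i \<and> j' = j then 1 else 0)" if "i'<K" "j'<L" for i' j'
      proof -
        have "E k (ap i' + bp j') = (if (ap i' + bp j') mod q = g k then 1 else 0)"
          using E_S k TLm[OF that] TLS by blast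
        also have "((ap i' + bp j') mod q = g k) = (i' = i \<and> j' = j)"
          using TLinj k(2) that ij unfolding inj_on_def by fastforce
        finally show ?thesis .
      qed
      have ETR: "E k (ap i' + bs s) = 0" if "i'<K" "s<T" for i' s
        using E_S[OF k(1)] TRS[OF that] TLdisj gkTL by auto
      have EBL: "E k (as t + bp j') = 0" if "t<T" "j'<L" for t j'
        using E_S[OF k(1)] BLS[OF that] TLdisj gkTL by auto
      have EBR: "E k (as t + bs s) = 0" if "t<T" "s<T" for t s
        using E_S[OF k(1)] BRS[OF that] TLdisj gkTL by auto
      show "dec (map (\<lambda>n. encF K T ap as A Rs (rho n) * encG L T bp bs B Ss (rho n)) [0..<N]) i j
               = blockA K A i * blockB L B j"
      proof (rule eq_matI)
        show "dim_row (dec (map (\<lambda>n. encF K T ap as A Rs (rho n) * encG L T bp bs B Ss (rho n)) [0..<N]) i j) =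
          dim_row (blockA K A i * blockB L B j)" using A unfolding dec_def blockA_def by simp
        show "dim_col (dec (map (\<lambda>n. encF K T ap as A Rs (rho n) * encG L T bp bs B Ss (rho n)) [0..<N]) i j) =
          dim_col (blockA K A i * blockB L B j)" using B unfolding dec_def blockB_def by simp
        fix r c assume rc: "r < dim_row (blockA K A i * blockB L B j)" "c < dim_col (blockA K A i * blockB L B j)"
        have r: "r < rA div K" and c: "c < cB div L" using rc A B unfolding blockA_def blockB_def by auto
        have prod: "(encF K T ap as A Rs x * encG L T bp bs B Ss x) $$ (r,c) =
          (\<Sum>l<cA. ((\<Sum>i'<K. blockA K A i' $$ (r,l) * x ^ ap i') + (\<Sum>t<T. (Rs ! t) $$ (r,l) * x ^ as t)) *
            ((\<Sum>j'<L. blockB L B j' $$ (l,c) * x ^ bp j') + (\<Sum>s<T. (Ss ! s) $$ (l,c) * x ^ bs s)))" for x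
          using A B r c unfolding encF_def encG_def
          by (simp add: scalar_prod_def row_def col_def atLeast0LessThan)
        have rhs: "(blockA K A i * blockB L B j) $$ (r,c) = (\<Sum>l<cA. blockA K A i $$ (r,l) * blockB L B j $$ (l,c))"
          using A B r c unfolding blockA_def blockB_def
          by (simp add: scalar_prod_def row_def col_def atLeast0LessThan)
        have "dec (map (\<lambda>n. encF K T ap as A Rs (rho n) * encG L T bp bs B Ss (rho n)) [0..<N]) i j $$ (r,c)
           = (\<Sum>n<N. Bi $$ (k, n) * (encF K T ap as A Rs (rho n) * encG L T bp bs B Ss (rho n)) $$ (r,c))"
          using r c unfolding dec_def k_def by simp
        also have "\<dots> = (\<Sum>l<cA. blockA K A i $$ (r,l) * blockB L B j $$ (l,c))"
          unfolding prod
          by (rule decode_core[OF _ _ _ _ ij]; use ETL ETR EBL EBR in \<open>simp add: E_def\<close>)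
        finally show "dec (map (\<lambda>n. encF K T ap as A Rs (rho n) * encG L T bp bs B Ss (rho n)) [0..<N]) i j $$ (r,c)
           = (blockA K A i * blockB L B j) $$ (r,c)" using rhs by simp
      qed
  qed
qed



lemma finite_carrier_mat: "finite (carrier_mat r c :: 'a::finite mat set)"
proof -
  let ?f = "\<lambda>M::'a mat. (\<lambda>p \<in> {..<r} \<times> {..<c}. M $$ p)"
  have "?f ` carrier_mat r c \<subseteq> PiE ({..<r} \<times> {..<c}) (\<lambda>_. UNIV)" by (force simp: PiE_iff)
  moreover have "finite (PiE ({..<r} \<times> {..<c}) (\<lambda>_. UNIV :: 'a set))" by (intro finite_PiE) auto
  ultimately have "finite (?f ` carrier_mat r c)" by (rule finite_subset)
  moreover have "inj_on ?f (carrier_mat r c)"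
  proof (rule inj_onI)
    fix M M' assume M: "M \<in> carrier_mat r c" "M' \<in> carrier_mat r c" and eq: "?f M = ?f M'"
    show "M = M'"
    proof (rule eq_matI)
      fix i j assume "i < dim_row M'" "j < dim_col M'"
      then show "M $$ (i,j) = M' $$ (i,j)" using M fun_cong[OF eq, of "(i,j)"] by auto
    qed (use M in auto)
  qed
  ultimately show ?thesis by (rule finite_imageD)
qed

definition LS :: "nat \<Rightarrow> nat \<Rightarrow> nat \<Rightarrow> 'a::zero mat list set" where
  "LS T r c = {Ms. length Ms = T \<and> set Ms \<subseteq> carrier_mat r c}"

lemma LS_finite: "finite (LS T r c :: 'a::{finite,zero} mat list set)"
proof -
  have "(LS T r c :: 'a mat list set) = {xs. set xs \<subseteq> carrier_mat r c \<and> length xs = T}" unfolding LS_def by auto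
  then show ?thesis by (simp add: finite_lists_length_eq finite_carrier_mat)
qed

lemma LS_ne: "LS T r c \<noteq> {}"
  unfolding LS_def by (rule ex_in_conv[THEN iffD1], rule exI[of _ "replicate T (0\<^sub>m r c)"]) auto

lemma unif_mats_LS: "unif_mats T r c = pmf_of_set (LS T r c)"
  unfolding unif_mats_def LS_def ..

lemma invertible_kernel:
  fixes M :: "'a::field mat"
  assumes inv: "invertible_mat M" and M: "M \<in> carrier_mat T T" and d: "d \<in> carrier_vec T"
    and z: "M *\<^sub>v d = 0\<^sub>v T"
  shows "d = 0\<^sub>v T"
proof -
  obtain B where B: "inverts_mat B M" "inverts_mat M B" using inv unfolding invertible_mat_def by blast
  have BT: "dim_row B = T" using B(1) M unfolding inverts_mat_def by (metis carrier_matD(2) index_mult_mat(3) index_one_mat(3))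
  have BT2: "dim_col B = T" using B(2) M unfolding inverts_mat_def by (metis carrier_matD(1) index_mult_mat(3) index_one_mat(3))
  have Bc: "B \<in> carrier_mat T T" using BT BT2 by auto
  have BM: "B * M = 1\<^sub>m T" using B BT unfolding inverts_mat_def by simp
  have "d = (B * M) *\<^sub>v d" using BM d by simp
  also have "\<dots> = B *\<^sub>v (M *\<^sub>v d)" using Bc M d by simp
  also have "\<dots> = 0\<^sub>v T" using z Bc by (intro eq_vecI) (auto simp: mult_mat_vec_def scalar_prod_def)
  finally show ?thesis .
qed

lemma pick_atLeast0: "t < T \<Longrightarrow> pick {0..<T} t = t"
proof -
  assume t: "t < T"
  have "{a\<in>{0..<T}. a < t} = {0..<t}" using t by auto
  then show ?thesis using pick_card_in_set[of t "{0..<T}"] t by simp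
qed

lemma unif_shift:
  fixes rho :: "nat \<Rightarrow> 'a::{finite,field}" and h :: "'a mat list \<Rightarrow> nat \<Rightarrow> 'a mat"
    and C :: "nat \<Rightarrow> nat \<Rightarrow> nat \<Rightarrow> 'a" and e :: "nat \<Rightarrow> nat"
  assumes W: "W \<subseteq> {0..<N}" "card W = T"
    and inv: "invertible_mat (submatrix (Vmat rho N e T) W {0..<T})"
    and hc: "\<And>Rs n. Rs \<in> LS T r c \<Longrightarrow> n \<in> W \<Longrightarrow> h Rs n \<in> carrier_mat r c"
    and he: "\<And>Rs n i j. Rs \<in> LS T r c \<Longrightarrow> n \<in> W \<Longrightarrow> i < r \<Longrightarrow> j < c \<Longrightarrow>
        h Rs n $$ (i,j) = C n i j + (\<Sum>t<T. (Rs!t) $$ (i,j) * rho n ^ e t)"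
  shows "map_pmf (\<lambda>Rs. map (h Rs) (sorted_list_of_set W)) (unif_mats T r c) = unif_mats T r c"
proof -
  let ?w = "sorted_list_of_set W"
  let ?f = "\<lambda>Rs. map (h Rs) ?w"
  have finW: "finite W" using W(1) finite_subset by blast
  have setw: "set ?w = W" using finW by simp
  have lenw: "length ?w = T" using W by simp
  have img: "?f ` LS T r c \<subseteq> LS T r c"
  proof (rule image_subsetI)
    fix Rs :: "'a mat list" assume Rs: "Rs \<in> LS T r c"
    have "set (?f Rs) \<subseteq> carrier_mat r c" using hc[OF Rs] setw by auto
    then show "?f Rs \<in> LS T r c" using lenw unfolding LS_def by simp
  qed
  let ?M = "submatrix (Vmat rho N e T) W {0..<T}"
  have c1: "card {i. i < dim_row (Vmat rho N e T) \<and> i \<in> W} = T"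
  proof -
    have "{i. i < dim_row (Vmat rho N e T) \<and> i \<in> W} = W" using W(1) unfolding Vmat_def by auto
    then show ?thesis using W(2) by simp
  qed
  have c2: "card {j. j < dim_col (Vmat rho N e T) \<and> j \<in> {0..<T}} = T"
  proof -
    have "{j. j < dim_col (Vmat rho N e T) \<and> j \<in> {0..<T}} = {0..<T}" unfolding Vmat_def by auto
    then show ?thesis by simp
  qed
  have Mc: "?M \<in> carrier_mat T T"
    using c1 c2 unfolding submatrix_def by simp
  have Mentry: "?M $$ (m,t) = rho (pick W m) ^ e t" if m: "m<T" and t: "t<T" for m t
  proof -
    have pW: "pick W m \<in> W" using pick_in_set m W(2) by metis
    have "?M $$ (m,t) = Vmat rho N e T $$ (pick W m, pick {0..<T} t)"
      by (rule submatrix_index) (use c1 c2 m t in auto)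
    also have "\<dots> = rho (pick W m) ^ e t" proof -
      have pN: "pick W m < N" using pW W(1) by auto
      show ?thesis unfolding Vmat_def using pN t by (simp add: pick_atLeast0[OF t])
    qed
    finally show ?thesis .
  qed
  have inj: "inj_on ?f (LS T r c)"
  proof (rule inj_onI)
    fix Rs Rs' assume R: "Rs \<in> LS T r c" "Rs' \<in> LS T r c" and eq: "?f Rs = ?f Rs'"
    have hn: "h Rs n = h Rs' n" if "n \<in> W" for n using eq that setw unfolding map_eq_conv by blast
    have ent: "(Rs!t) $$ (i,j) = (Rs'!t) $$ (i,j)" if ij: "i<r" "j<c" and t: "t<T" for i j t
    proof -
      define d where "d = Matrix.vec T (\<lambda>t. (Rs!t) $$ (i,j) - (Rs'!t) $$ (i,j))"
      have "?M *\<^sub>v d = 0\<^sub>v T"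
      proof (rule eq_vecI)
        show "dim_vec (?M *\<^sub>v d) = dim_vec (0\<^sub>v T)" using Mc by simp
        fix m assume "m < dim_vec (0\<^sub>v T)" hence m: "m<T" by simp
        have pW: "pick W m \<in> W" using pick_in_set m W(2) by metis
        have s: "(\<Sum>t<T. (Rs!t) $$ (i,j) * rho (pick W m) ^ e t) = (\<Sum>t<T. (Rs'!t) $$ (i,j) * rho (pick W m) ^ e t)"
          using he[OF R(1) pW ij] he[OF R(2) pW ij] hn[OF pW] by simp
        have "(?M *\<^sub>v d) $ m = (\<Sum>t<T. ?M $$ (m,t) * d $ t)"
          using Mc m d_def by (simp add: mult_mat_vec_def scalar_prod_def atLeast0LessThan)
        also have "\<dots> = (\<Sum>t<T. (Rs!t) $$ (i,j) * rho (pick W m) ^ e t - (Rs'!t) $$ (i,j) * rho (pick W m) ^ e t)"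
          by (rule sum.cong[OF refl]) (simp add: Mentry[OF m] d_def right_diff_distrib mult.commute)
        also have "\<dots> = 0" using s by (simp add: sum_subtractf)
        finally show "(?M *\<^sub>v d) $ m = 0\<^sub>v T $ m" using m by simp
      qed
      moreover have "d \<in> carrier_vec T" unfolding d_def by simp
      ultimately have "d = 0\<^sub>v T" using invertible_kernel[OF inv Mc] by blast
      then have "d $ t = 0" using t by simp
      then show ?thesis using t unfolding d_def by simp
    qed
    show "Rs = Rs'"
    proof (rule nth_equalityI)
      show "length Rs = length Rs'" using R unfolding LS_def by simp
      fix t assume t: "t < length Rs"
      have tT: "t < T" using t R unfolding LS_def by simp
      have c: "Rs!t \<in> carrier_mat r c" "Rs'!t \<in> carrier_mat r c" proof -
        have m1: "Rs!t \<in> set Rs" using t by simp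
        have m2: "Rs'!t \<in> set Rs'" using tT R unfolding LS_def by simp
        show "Rs!t \<in> carrier_mat r c" "Rs'!t \<in> carrier_mat r c" using m1 m2 R unfolding LS_def by blast+
      qed
      show "Rs!t = Rs'!t"
        using c by (intro eq_matI) (auto intro: ent[OF _ _ tT])
    qed
  qed
  have "?f ` LS T r c = LS T r c" by (rule endo_inj_surj[OF LS_finite img inj])
  then show ?thesis unfolding unif_mats_LS using map_pmf_of_set_inj[OF inj LS_ne LS_finite] by simp
qed


lemma mutual_info_pair: "mutual_info (pair_pmf D Q) = 0"
  unfolding mutual_info_def map_fst_pair_pmf map_snd_pair_pmf
proof (rule sum.neutral, rule ballI)
  fix z assume z: "z \<in> set_pmf (pair_pmf D Q)"
  obtain a b where zab: "z = (a,b)" by (cases z)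
  have pos: "pmf (pair_pmf D Q) z \<noteq> 0" using z set_pmf_iff by metis
  have eq: "pmf (pair_pmf D Q) z = pmf D a * pmf Q b" using zab pmf_pair by simp
  show "pmf (pair_pmf D Q) z * log 2 (pmf (pair_pmf D Q) z / (pmf D (fst z) * pmf Q (snd z))) = 0"
    using pos eq zab by simp
qed

lemma map_zip_pairs: "map (\<lambda>n. (f n, g n)) xs = zip (map f xs) (map g xs)"
  by (induct xs) auto

lemma view_eq:
  fixes rho :: "nat \<Rightarrow> 'a::{finite,field}" and D :: "('a mat \<times> 'a mat) pmf"
  assumes D: "set_pmf D \<subseteq> carrier_mat rA cA \<times> carrier_mat cA cB"
    and W: "W \<subseteq> {0..<N}" "card W = T"
    and invA: "invertible_mat (submatrix (Vmat rho N as T) W {0..<T})"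
    and invB: "invertible_mat (submatrix (Vmat rho N bs T) W {0..<T})"
  shows "view_experiment K L T ap as bp bs rho D W =
    pair_pmf D (bind_pmf (unif_mats T (rA div K) cA)
      (\<lambda>X. bind_pmf (unif_mats T cA (cB div L)) (\<lambda>Y. return_pmf (zip X Y))))"
  unfolding view_experiment_def pair_pmf_def
proof (rule bind_pmf_cong[OF refl])
  fix AB assume "AB \<in> set_pmf D"
  then obtain A B where AB: "AB = (A,B)" and A: "A \<in> carrier_mat rA cA" and B: "B \<in> carrier_mat cA cB"
    using D by (cases AB) auto
  let ?w = "sorted_list_of_set W"
  let ?UR = "unif_mats T (rA div K) cA :: 'a mat list pmf"
  let ?US = "unif_mats T cA (cB div L) :: 'a mat list pmf"
  define Phi where "Phi X = map (\<lambda>n. encF K T ap as A X (rho n)) ?w" for X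
  define Psi where "Psi Y = map (\<lambda>n. encG L T bp bs B Y (rho n)) ?w" for Y
  have mapF: "map_pmf Phi ?UR = ?UR"
    unfolding Phi_def
  proof (rule unif_shift[OF W invA, where C = "\<lambda>n i j. \<Sum>i'<K. blockA K A i' $$ (i,j) * rho n ^ ap i'"])
    fix Rs n show "encF K T ap as A Rs (rho n) \<in> carrier_mat (rA div K) cA"
      using A unfolding encF_def by simp
  next
    fix Rs n i j assume "i < rA div K" "j < cA"
    then show "encF K T ap as A Rs (rho n) $$ (i,j) = (\<Sum>i'<K. blockA K A i' $$ (i,j) * rho n ^ ap i') +
        (\<Sum>t<T. (Rs!t) $$ (i,j) * rho n ^ as t)"
      using A unfolding encF_def by simp
  qed
  have mapG: "map_pmf Psi ?US = ?US"
    unfolding Psi_def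
  proof (rule unif_shift[OF W invB, where C = "\<lambda>n i j. \<Sum>j'<L. blockB L B j' $$ (i,j) * rho n ^ bp j'"])
    fix Rs n show "encG L T bp bs B Rs (rho n) \<in> carrier_mat cA (cB div L)"
      using B unfolding encG_def by simp
  next
    fix Rs n i j assume "i < cA" "j < cB div L"
    then show "encG L T bp bs B Rs (rho n) $$ (i,j) = (\<Sum>j'<L. blockB L B j' $$ (i,j) * rho n ^ bp j') +
        (\<Sum>t<T. (Rs!t) $$ (i,j) * rho n ^ bs t)"
      using B unfolding encG_def by simp
  qed
  have "bind_pmf (unif_mats T (dim_row (fst AB) div K) (dim_col (fst AB)))
          (\<lambda>Rs. bind_pmf (unif_mats T (dim_row (snd AB)) (dim_col (snd AB) div L))
            (\<lambda>Ss. return_pmf (AB, map (\<lambda>n. (encF K T ap as (fst AB) Rs (rho n), encG L T bp bs (snd AB) Ss (rho n))) ?w)))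
      = bind_pmf ?UR (\<lambda>X. bind_pmf ?US (\<lambda>Y. return_pmf (AB, zip (Phi X) (Psi Y))))"
    using A B unfolding AB Phi_def Psi_def by (simp add: map_zip_pairs)
  also have "\<dots> = bind_pmf (map_pmf Phi ?UR) (\<lambda>X. bind_pmf (map_pmf Psi ?US) (\<lambda>Y. return_pmf (AB, zip X Y)))"
    by (simp add: bind_map_pmf)
  also have "\<dots> = bind_pmf ?UR (\<lambda>X. bind_pmf ?US (\<lambda>Y. return_pmf (AB, zip X Y)))"
    unfolding mapF mapG ..
  also have "\<dots> = bind_pmf (bind_pmf ?UR (\<lambda>X. bind_pmf ?US (\<lambda>Y. return_pmf (zip X Y)))) (\<lambda>y. return_pmf (AB, y))"
    by (simp add: bind_assoc_pmf bind_return_pmf)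
  finally show "bind_pmf (unif_mats T (dim_row (fst AB) div K) (dim_col (fst AB)))
          (\<lambda>Rs. bind_pmf (unif_mats T (dim_row (snd AB)) (dim_col (snd AB) div L))
            (\<lambda>Ss. return_pmf (AB, map (\<lambda>n. (encF K T ap as (fst AB) Rs (rho n), encG L T bp bs (snd AB) Ss (rho n))) ?w)))
     = bind_pmf (bind_pmf ?UR (\<lambda>X. bind_pmf ?US (\<lambda>Y. return_pmf (zip X Y)))) (\<lambda>y. return_pmf (AB, y))" .
qed

lemma private_thm:
  fixes rho :: "nat \<Rightarrow> 'a::{finite,field}"
  assumes rho_IV: "cond_IV_ab q K L T N ap as bp bs rho"
  shows "T_private rA cA cB K L T N ap as bp bs rho"
  unfolding T_private_def
proof (intro allI impI)
  fix D :: "('a mat \<times> 'a mat) pmf" and W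
  assume D: "set_pmf D \<subseteq> carrier_mat rA cA \<times> carrier_mat cA cB" and W1: "W \<subseteq> {0..<N}" and W2: "card W = T"
  have inv: "invertible_mat (submatrix (Vmat rho N as T) W {0..<T})"
     "invertible_mat (submatrix (Vmat rho N bs T) W {0..<T})"
    using rho_IV W1 W2 unfolding cond_IV_ab_def by auto
  show "mutual_info (view_experiment K L T ap as bp bs rho D W) = 0"
    unfolding view_eq[OF D W1 W2 inv] by (rule mutual_info_pair)
qed


theorem theorem1:
  fixes rho :: "nat \<Rightarrow> 'a::{finite,field}"
    and q K L T N rA cA cB :: nat
    and ap as bp bs :: "nat \<Rightarrow> nat"
  assumes cat: "is_CAT q K L T N ap as bp bs"
    and prime_field: "prime (CARD('a))"
    and q_dvd: "q dvd CARD('a) - 1"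
    and K_pos: "K > 0" and L_pos: "L > 0"
    and K_dvd: "K dvd rA" and L_dvd: "L dvd cB"
    and rho_IV: "cond_IV_ab q K L T N ap as bp bs rho"
  shows "T_private rA cA cB K L T N ap as bp bs rho \<and> decodable rA cA cB K L T N ap as bp bs rho"
    using decodable_thm[OF cat rho_IV] private_thm[OF rho_IV] by blast

end
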